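(* Every total strongly polynomial-time computable functional $F\colon\mathcal B\to\mathcal B$ is polynomial-time computable.
   Context: $\Sigma=\{0,1\}$, $\mathcal B=(\Sigma^* )^{\Sigma^*}$ is the set of total string functions. An oracle Turing machine $M^?$ with oracle $\varphi$ replaces, upon entering its query state, the query-tape content $\mathbf b$ by $\varphi(\mathbf b)$ in one time step; $\operatorname{time}_{M^\varphi}(\mathbf a)\in\mathbb N\cup\{\infty\}$ is its number of steps on input $\mathbf a$. $M^?$ computes $F$ if $M^\varphi=F(\varphi)$ for all $\varphi\in\mathcal B$. Size function: $|\varphi|(n)=\max\{|\varphi(\mathbf a)|:|\mathbf a|\le n\}$. Second-order polynomials: smallest class of functions $\mathbb N^{\mathbb N}\times\mathbb N\to\mathbb N$ containing $(l,n)\mapsto p(n)$ for polynomials $p$ with natural coefficients, closed under pointwise sum, product and $P\mapsto P^+$, $P^+(l,n)=l(P(l,n))$. $F$ is polynomial-time computable if computed by a machine with $\operatorname{time}_{M^\varphi}(\mathbf a)\le P(|\varphi|,|\mathbf a|)$ for all $\varphi,\mathbf a$ for some second-order polynomial $P$. Length revision function: for oracle $\varphi$ and input $\mathbf a$, let $\mathbf b_k$ be the content of the oracle answer tape at step $k$; $o_{\varphi,\mathbf a}(0)=|\mathbf a|$, $o_{\varphi,\mathbf a}(n+1)=\max\{o_{\varphi,\mathbf a}(n),|\mathbf b_{n+1}|\}$. A function $t\colon\mathbb N\to\mathbb N$ is a step-count for $M^?$ if for all $\varphi\in\mathcal B$, $\mathbf a\in\Sigma^*$ and all $n\le\operatorname{time}_{M^\varphi}(\mathbf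 a)$: $n\le t(o_{\varphi,\mathbf a}(n))$. $M^?$ has finite length-revision if there is $N\in\mathbb N$ with $\#o_{\varphi,\mathbf a}(\mathbb N)\le N$ for all $\varphi\in\mathcal B$, $\mathbf a\in\Sigma^*$ (where $o_{\varphi,\mathbf a}(\mathbb N)$ is the image of $o_{\varphi,\mathbf a}$). $F$ is strongly polynomial-time computable if it is computed by an oracle machine having finite length-revision and a polynomial step-count. *)

theory Defs
  imports Main "HOL-Library.Extended_Nat" "HOL-Computational_Algebra.Polynomial"
begin

(* Sigma = {0,1} is rendered as bool (False = 0, True = 1); Sigma^* = bool list *)
type_synonym word = "bool list"
type_synonym orcl = "word \<Rightarrow> word"

(* Tape symbols are natural numbers: 0 = blank, 1 = bit 0, 2 = bit 1; a machine
   uses only symbols < otm_nsyms.  A machine has otm_ntapes >= 4 tapes: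
   tape 0 = input tape, tape 1 = orcl query tape, tape 2 = orcl answer tape
   (written only by the orcl), tape 3 = output tape, further tapes = work tapes. *)
record otm =
  otm_ntapes :: nat
  otm_nstates :: nat
  otm_nsyms :: nat
  otm_start :: nat
  otm_halt :: nat
  otm_query :: nat
  otm_answer :: nat
  otm_delta :: "nat \<Rightarrow> nat list \<Rightarrow> nat \<times> nat list \<times> int list"

definition wf_otm :: "otm \<Rightarrow> bool" where
  "wf_otm M \<longleftrightarrow> otm_ntapes M \<ge> 4 \<and> otm_nsyms M \<ge> 3 \<and>
     otm_start M < otm_nstates M \<and> otm_halt M < otm_nstates M \<and>
     otm_query M < otm_nstates M \<and> otm_answer M < otm_nstates M \<and>
     otm_query M \<noteq> otm_halt M \<and>
     (\<forall>q rs. q < otm_nstates M \<and> length rs = otm_ntapes M \<and> (\<forall>s\<in>set rs. s < otm_nsyms M) \<longrightarrow>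
        (case otm_delta M q rs of (q', ws, ms) \<Rightarrow>
           q' < otm_nstates M \<and> length ws = otm_ntapes M \<and> (\<forall>s\<in>set ws. s < otm_nsyms M) \<and>
           length ms = otm_ntapes M \<and> (\<forall>m\<in>set ms. m \<in> {-1, 0, 1})))"

record config =
  cf_state :: nat
  cf_tapes :: "(int \<Rightarrow> nat) list"
  cf_heads :: "int list"

definition tape_word :: "(int \<Rightarrow> nat) \<Rightarrow> word" where
  "tape_word T = map (\<lambda>i. T (int i) = 2) [0..< (LEAST i. T (int i) \<notin> {1, 2})]"

definition put_word :: "word \<Rightarrow> (int \<Rightarrow> nat)" where
  "put_word w = (\<lambda>i. if 0 \<le> i \<and> nat i < length w then (if w ! nat i then 2 else 1) else 0)"

definition init_config :: "otm \<Rightarrow> word \<Rightarrow> config" where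
  "init_config M a = \<lparr> cf_state = otm_start M,
     cf_tapes = put_word a # replicate (otm_ntapes M - 1) (\<lambda>_. 0),
     cf_heads = replicate (otm_ntapes M) 0 \<rparr>"

definition otm_step :: "otm \<Rightarrow> orcl \<Rightarrow> config \<Rightarrow> config" where
  "otm_step M \<phi> c =
    (if cf_state c = otm_halt M then c
     else if cf_state c = otm_query M then
       \<lparr> cf_state = otm_answer M,
         cf_tapes = (cf_tapes c)[2 := put_word (\<phi> (tape_word (cf_tapes c ! 1)))],
         cf_heads = (cf_heads c)[2 := 0] \<rparr>
     else
       (let rs = map (\<lambda>j. (cf_tapes c ! j) (cf_heads c ! j)) [0..<otm_ntapes M] in
        case otm_delta M (cf_state c) rs of (q', ws, ms) \<Rightarrow>
        \<lparr> cf_state = q',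
          cf_tapes = map (\<lambda>j. if j = 2 then cf_tapes c ! j
                               else (cf_tapes c ! j)(cf_heads c ! j := ws ! j)) [0..<otm_ntapes M],
          cf_heads = map (\<lambda>j. cf_heads c ! j + ms ! j) [0..<otm_ntapes M] \<rparr>))"

definition otm_run :: "otm \<Rightarrow> orcl \<Rightarrow> word \<Rightarrow> nat \<Rightarrow> config" where
  "otm_run M \<phi> a k = (otm_step M \<phi> ^^ k) (init_config M a)"

definition otm_time :: "otm \<Rightarrow> orcl \<Rightarrow> word \<Rightarrow> enat" where
  "otm_time M \<phi> a =
    (if \<exists>k. cf_state (otm_run M \<phi> a k) = otm_halt M
     then enat (LEAST k. cf_state (otm_run M \<phi> a k) = otm_halt M) else \<infinity>)"

definition otm_output :: "otm \<Rightarrow> orcl \<Rightarrow> word \<Rightarrow> word" where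
  "otm_output M \<phi> a = tape_word (cf_tapes (otm_run M \<phi> a (the_enat (otm_time M \<phi> a))) ! 3)"

definition otm_computes :: "otm \<Rightarrow> (orcl \<Rightarrow> orcl) \<Rightarrow> bool" where
  "otm_computes M F \<longleftrightarrow> (\<forall>\<phi> a. otm_time M \<phi> a \<noteq> \<infinity> \<and> otm_output M \<phi> a = F \<phi> a)"

definition size_fun :: "orcl \<Rightarrow> nat \<Rightarrow> nat" where
  "size_fun \<phi> n = Max {length (\<phi> a) | a. length a \<le> n}"

inductive sopoly :: "((nat \<Rightarrow> nat) \<Rightarrow> nat \<Rightarrow> nat) \<Rightarrow> bool" where
  const_poly: "sopoly (\<lambda>l n. poly p n)" for p :: "nat poly"
| add: "sopoly P \<Longrightarrow> sopoly Q \<Longrightarrow> sopoly (\<lambda>l n. P l n + Q l n)"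
| mult: "sopoly P \<Longrightarrow> sopoly Q \<Longrightarrow> sopoly (\<lambda>l n. P l n * Q l n)"
| app: "sopoly P \<Longrightarrow> sopoly (\<lambda>l n. l (P l n))"

definition poly_time_computable :: "(orcl \<Rightarrow> orcl) \<Rightarrow> bool" where
  "poly_time_computable F \<longleftrightarrow>
     (\<exists>M P. wf_otm M \<and> otm_computes M F \<and> sopoly P \<and>
        (\<forall>\<phi> a. otm_time M \<phi> a \<le> enat (P (size_fun \<phi>) (length a))))"

fun length_rev :: "otm \<Rightarrow> orcl \<Rightarrow> word \<Rightarrow> nat \<Rightarrow> nat" where
  "length_rev M \<phi> a 0 = length a"
| "length_rev M \<phi> a (Suc n) =
     max (length_rev M \<phi> a n) (length (tape_word (cf_tapes (otm_run M \<phi> a (Suc n)) ! 2)))"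

definition step_count :: "otm \<Rightarrow> (nat \<Rightarrow> nat) \<Rightarrow> bool" where
  "step_count M t \<longleftrightarrow>
     (\<forall>\<phi> a n. enat n \<le> otm_time M \<phi> a \<longrightarrow> n \<le> t (length_rev M \<phi> a n))"

definition finite_length_revision :: "otm \<Rightarrow> bool" where
  "finite_length_revision M \<longleftrightarrow>
     (\<exists>N::nat. \<forall>\<phi> a. finite (range (length_rev M \<phi> a)) \<and> card (range (length_rev M \<phi> a)) \<le> N)"

definition strongly_poly_time_computable :: "(orcl \<Rightarrow> orcl) \<Rightarrow> bool" where
  "strongly_poly_time_computable F \<longleftrightarrow>
     (\<exists>M t. wf_otm M \<and> otm_computes M F \<and> finite_length_revision M \<and>
        (\<exists>p::nat poly. t = poly p) \<and> step_count M t)"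

end

theory Submission
  imports Defs
begin

lemma tape_word_len: "T (int k) = 0 \<Longrightarrow> length (tape_word T) \<le> k"
  unfolding tape_word_def by (simp add: Least_le)

lemma least_put: "(LEAST i. put_word w (int i) \<notin> {1, 2}) = length w"
  by (rule Least_equality) (auto simp: put_word_def not_le split: if_splits)

lemma tape_word_put: "tape_word (put_word w) = w"
  unfolding tape_word_def least_put
  by (rule nth_equalityI) (auto simp: put_word_def)

lemma put_word_le: "put_word w i \<le> 2"
  by (simp add: put_word_def)

lemma size_fun_ge:
  assumes "length a \<le> n" shows "length (\<phi> a) \<le> size_fun \<phi> n"
proof -
  have fin: "finite {length (\<phi> a) | a. length a \<le> n}"
  proof -
    have "{length (\<phi> a) | a. length a \<le> n} = (\<lambda>a. length (\<phi> a)) ` {a. length a \<le> n}" by auto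
    moreover have "finite {a::bool list. length a \<le> n}"
      using finite_lists_length_le[of "UNIV::bool set" n] by simp
    ultimately show ?thesis by simp
  qed
  show ?thesis unfolding size_fun_def using assms by (intro Max_ge[OF fin]) auto
qed

lemma size_fun_mono:
  assumes "m \<le> n" shows "size_fun \<phi> m \<le> size_fun \<phi> n"
proof -
  have "size_fun \<phi> m \<in> {length (\<phi> a) | a. length a \<le> m}"
    unfolding size_fun_def
  proof (rule Max_in)
    have "{length (\<phi> a) | a. length a \<le> m} = (\<lambda>a. length (\<phi> a)) ` {a. length a \<le> m}" by auto
    moreover have "finite {a::bool list. length a \<le> m}"
      using finite_lists_length_le[of "UNIV::bool set" m] by simp
    ultimately show "finite {length (\<phi> a) | a. length a \<le> m}" by simp
    have "length ([]::bool list) \<le> m" by simp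
    then show "{length (\<phi> a) | a. length a \<le> m} \<noteq> {}" by blast
  qed
  then obtain a where "length a \<le> m" "size_fun \<phi> m = length (\<phi> a)" by auto
  then show ?thesis using size_fun_ge[of a n \<phi>] assms by simp
qed

lemma nth_map_upt0: "j < n \<Longrightarrow> map f [0..<n] ! j = f j" by simp

definition inv :: "otm \<Rightarrow> orcl \<Rightarrow> nat \<Rightarrow> config \<Rightarrow> bool" where
  "inv M \<phi> k c \<longleftrightarrow> cf_state c < otm_nstates M \<and> length (cf_tapes c) = otm_ntapes M \<and>
     length (cf_heads c) = otm_ntapes M \<and> (\<forall>j<otm_ntapes M. \<forall>i. (cf_tapes c ! j) i < otm_nsyms M) \<and>
     cf_heads c ! 1 \<le> int k \<and> (\<forall>i\<ge>int k. (cf_tapes c ! 1) i = 0) \<and>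
     length (tape_word (cf_tapes c ! 2)) \<le> size_fun \<phi> k"

lemma inv_init:
  assumes "wf_otm M" shows "inv M \<phi> 0 (init_config M a)"
proof -
  have nt: "otm_ntapes M \<ge> 4" "otm_nsyms M \<ge> 3" "otm_start M < otm_nstates M"
    using assms by (auto simp: wf_otm_def)
  have "(\<forall>j<otm_ntapes M. \<forall>i. ((put_word a # replicate (otm_ntapes M - 1) (\<lambda>_. 0)) ! j) i < otm_nsyms M)"
  proof (intro allI impI)
    fix j i assume "j < otm_ntapes M"
    show "((put_word a # replicate (otm_ntapes M - 1) (\<lambda>_. 0)) ! j) i < otm_nsyms M"
      using nt put_word_le[of a i] \<open>j < otm_ntapes M\<close>
      by (cases j) (auto simp: nth_Cons)
  qed
  moreover have "length (tape_word (\<lambda>_::int. 0::nat)) \<le> 0" by (rule tape_word_len) simp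
  ultimately show ?thesis using nt
    by (auto simp: inv_def init_config_def nth_Cons numeral_eq_Suc)
qed

lemma inv_mono: "inv M \<phi> k c \<Longrightarrow> inv M \<phi> (Suc k) c"
  unfolding inv_def using size_fun_mono[of k "Suc k" \<phi>] by force

lemma inv_step:
  assumes wf: "wf_otm M" and I: "inv M \<phi> k c"
  shows "inv M \<phi> (Suc k) (otm_step M \<phi> c)"
proof -
  have nt: "otm_ntapes M \<ge> 4" "otm_nsyms M \<ge> 3" "otm_answer M < otm_nstates M"
    using wf by (auto simp: wf_otm_def)
  consider (h) "cf_state c = otm_halt M" | (q) "cf_state c \<noteq> otm_halt M" "cf_state c = otm_query M"
    | (d) "cf_state c \<noteq> otm_halt M" "cf_state c \<noteq> otm_query M" by blast
  then show ?thesis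
  proof cases
    case h then show ?thesis using inv_mono[OF I] by (simp add: otm_step_def)
  next
    case q
    have "length (tape_word (cf_tapes c ! 1)) \<le> k"
      using I by (intro tape_word_len) (auto simp: inv_def)
    then have "length (\<phi> (tape_word (cf_tapes c ! 1))) \<le> size_fun \<phi> k"
      by (rule size_fun_ge)
    also have "\<dots> \<le> size_fun \<phi> (Suc k)" by (rule size_fun_mono) simp
    finally have L: "length (\<phi> (tape_word (cf_tapes c ! 1))) \<le> size_fun \<phi> (Suc k)" .
    show ?thesis using q I nt L put_word_le
      by (auto simp: otm_step_def inv_def tape_word_put nth_list_update le_less_trans
          intro: le_less_trans[OF put_word_le])
  next
    case d
    define rs where "rs = map (\<lambda>j. (cf_tapes c ! j) (cf_heads c ! j)) [0..<otm_ntapes M]"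
    obtain q' ws ms where D: "otm_delta M (cf_state c) rs = (q', ws, ms)" by (metis prod_cases3)
    have rsv: "length rs = otm_ntapes M" "\<forall>s\<in>set rs. s < otm_nsyms M"
      using I by (auto simp: rs_def inv_def)
    have W: "q' < otm_nstates M \<and> length ws = otm_ntapes M \<and> (\<forall>s\<in>set ws. s < otm_nsyms M) \<and>
           length ms = otm_ntapes M \<and> (\<forall>m\<in>set ms. m \<in> {-1, 0, 1})"
      using wf rsv I D unfolding wf_otm_def inv_def by fastforce
    have st: "otm_step M \<phi> c = \<lparr> cf_state = q',
          cf_tapes = map (\<lambda>j. if j = 2 then cf_tapes c ! j
                               else (cf_tapes c ! j)(cf_heads c ! j := ws ! j)) [0..<otm_ntapes M],
          cf_heads = map (\<lambda>j. cf_heads c ! j + ms ! j) [0..<otm_ntapes M] \<rparr>"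
      using d D by (simp add: otm_step_def rs_def Let_def)
    have "ms ! 1 \<in> set ms" using W nt by (intro nth_mem) simp
    then have m1: "ms ! 1 \<le> 1" using W by auto
    have h1: "cf_heads c ! 1 \<le> int k" and t1: "\<forall>i\<ge>int k. (cf_tapes c ! 1) i = 0"
      and t2: "length (tape_word (cf_tapes c ! 2)) \<le> size_fun \<phi> k"
      and sy: "\<forall>j<otm_ntapes M. \<forall>i. (cf_tapes c ! j) i < otm_nsyms M"
      using I by (auto simp: inv_def)
    have "length (tape_word (cf_tapes c ! 2)) \<le> size_fun \<phi> (Suc k)"
      using t2 size_fun_mono[of k "Suc k" \<phi>] by simp
    moreover have "\<forall>j<otm_ntapes M. \<forall>i. ((if j = 2 then cf_tapes c ! j
                               else (cf_tapes c ! j)(cf_heads c ! j := ws ! j))) i < otm_nsyms M"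
      using sy W by auto
    moreover have "\<forall>i\<ge>int (Suc k). ((cf_tapes c ! 1)(cf_heads c ! 1 := ws ! 1)) i = 0"
      using h1 t1 by auto
    ultimately show ?thesis unfolding st inv_def
    proof (simp only: config.simps, intro conjI)
      assume A: "length (tape_word (cf_tapes c ! 2)) \<le> size_fun \<phi> (Suc k)"
        "\<forall>j<otm_ntapes M. \<forall>i. ((if j = 2 then cf_tapes c ! j
                               else (cf_tapes c ! j)(cf_heads c ! j := ws ! j))) i < otm_nsyms M"
        "\<forall>i\<ge>int (Suc k). ((cf_tapes c ! 1)(cf_heads c ! 1 := ws ! 1)) i = 0"
      have n1: "1 < otm_ntapes M" and n2: "2 < otm_ntapes M" using nt by auto
      show "q' < otm_nstates M" using W by simp
      show "length (map (\<lambda>j. if j = 2 then cf_tapes c ! j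
                   else (cf_tapes c ! j)(cf_heads c ! j := ws ! j)) [0..<otm_ntapes M]) = otm_ntapes M" by simp
      show "length (map (\<lambda>j. cf_heads c ! j + ms ! j) [0..<otm_ntapes M]) = otm_ntapes M" by simp
      show "\<forall>j<otm_ntapes M. \<forall>i. (map (\<lambda>j. if j = 2 then cf_tapes c ! j
                   else (cf_tapes c ! j)(cf_heads c ! j := ws ! j)) [0..<otm_ntapes M] ! j) i < otm_nsyms M"
      proof (intro allI impI)
        fix j i assume "j < otm_ntapes M"
        then show "(map (\<lambda>j. if j = 2 then cf_tapes c ! j
                   else (cf_tapes c ! j)(cf_heads c ! j := ws ! j)) [0..<otm_ntapes M] ! j) i < otm_nsyms M"
        proof -
          have e: "\<And>x::nat. 0 + x = x" by simp
          have "(if j = 2 then cf_tapes c ! j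
                   else (cf_tapes c ! j)(cf_heads c ! j := ws ! j)) i < otm_nsyms M"
            using A(2) \<open>j < otm_ntapes M\<close> by blast
          then show ?thesis using \<open>j < otm_ntapes M\<close> by (simp only: nth_map_upt0)
        qed
      qed
      show "map (\<lambda>j. cf_heads c ! j + ms ! j) [0..<otm_ntapes M] ! 1 \<le> int (Suc k)"
        using n1 h1 m1 by simp
      show "\<forall>i\<ge>int (Suc k). (map (\<lambda>j. if j = 2 then cf_tapes c ! j
                   else (cf_tapes c ! j)(cf_heads c ! j := ws ! j)) [0..<otm_ntapes M] ! 1) i = 0"
        using n1 A(3) by simp
      show "length (tape_word (map (\<lambda>j. if j = 2 then cf_tapes c ! j
                   else (cf_tapes c ! j)(cf_heads c ! j := ws ! j)) [0..<otm_ntapes M] ! 2)) \<le> size_fun \<phi> (Suc k)"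
        using n2 A(1) by (simp only: nth_map_upt0 if_True refl)
    qed
  qed
qed

lemma inv_run: "wf_otm M \<Longrightarrow> inv M \<phi> k (otm_run M \<phi> a k)"
  by (induction k) (auto simp: otm_run_def inv_init inv_step)


lemma ans_bound: "wf_otm M \<Longrightarrow> length (tape_word (cf_tapes (otm_run M \<phi> a k) ! 2)) \<le> size_fun \<phi> k"
  using inv_run[of M \<phi> k a] by (simp add: inv_def)

lemma poly_mono_nat: "x \<le> y \<Longrightarrow> poly (p::nat poly) x \<le> poly p y"
  by (induction p rule: pCons_induct) (auto intro: add_mono mult_mono)

lemma sopoly_const: "sopoly (\<lambda>l n. c)"
  using const_poly[of "[:c:]"] by simp

lemma sopoly_id: "sopoly (\<lambda>l n. n)"
  using const_poly[of "[:0,1:]"] by simp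

lemma sopoly_comp: "sopoly P \<Longrightarrow> sopoly (\<lambda>l n. poly q (P l n))"
proof (induction q rule: pCons_induct)
  case 0 then show ?case using sopoly_const[of 0] by simp
next
  case (pCons a q)
  have "sopoly (\<lambda>l n. a + P l n * poly q (P l n))"
    by (intro sopoly.add sopoly.mult sopoly_const pCons.prems pCons.IH)
  then show ?case by simp
qed

fun Qf :: "nat poly \<Rightarrow> (nat \<Rightarrow> nat) \<Rightarrow> nat \<Rightarrow> nat \<Rightarrow> nat" where
  "Qf p l n 0 = n"
| "Qf p l n (Suc i) = Qf p l n i + l (poly p (Qf p l n i) + 1)"

lemma sopoly_Qf: "sopoly (\<lambda>l n. Qf p l n i)"
proof (induction i)
  case 0 then show ?case using sopoly_id by simp
next
  case (Suc i)
  have "sopoly (\<lambda>l n. Qf p l n i + l (poly p (Qf p l n i) + 1))"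
    by (intro sopoly.add sopoly.app sopoly_comp sopoly_const Suc.IH)
  then show ?case by simp
qed

lemma Qf_mono: "i \<le> j \<Longrightarrow> Qf p l n i \<le> Qf p l n j"
  by (induction j rule: dec_induct) (auto intro: le_trans)

lemma lr_mono: "m \<le> n \<Longrightarrow> length_rev M \<phi> a m \<le> length_rev M \<phi> a n"
  by (induction n rule: dec_induct) (auto intro: le_trans)

lemma claim:
  assumes wf: "wf_otm M" and sc: "step_count M (poly p)"
  shows "enat n \<le> otm_time M \<phi> a \<Longrightarrow>
    length_rev M \<phi> a n \<le> Qf p (size_fun \<phi>) (length a) (card (length_rev M \<phi> a ` {..n}) - 1)"
proof (induction n)
  case 0 then show ?case by simp
next
  case (Suc n)
  let ?o = "length_rev M \<phi> a"
  let ?Q = "Qf p (size_fun \<phi>) (length a)"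
  have hn: "enat n \<le> otm_time M \<phi> a" using Suc.prems
    by (meson enat_ord_simps(1) le_SucI order.trans order_refl)
  note IH = Suc.IH[OF hn]
  have Sdef: "?o ` {..Suc n} = insert (?o (Suc n)) (?o ` {..n})"
    by (auto simp: atMost_Suc)
  show ?case
  proof (cases "?o (Suc n) = ?o n")
    case True
    then have "?o ` {..Suc n} = ?o ` {..n}" using Sdef by auto
    then show ?thesis using IH True by simp
  next
    case False
    then have gt: "?o (Suc n) = length (tape_word (cf_tapes (otm_run M \<phi> a (Suc n)) ! 2))"
      and lt: "?o n < ?o (Suc n)" by (auto simp: max_def split: if_splits)
    have notin: "?o (Suc n) \<notin> ?o ` {..n}"
      using lt lr_mono[of _ n M \<phi> a] by (auto simp: not_le)
    define c where "c = card (?o ` {..n})"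
    have c1: "c \<ge> 1" unfolding c_def by (simp add: Suc_le_eq card_gt_0_iff)
    have cS: "card (?o ` {..Suc n}) = Suc c" unfolding Sdef c_def using notin by simp
    have "n \<le> poly p (?o n)" using sc hn by (simp add: step_count_def)
    also have "\<dots> \<le> poly p (?Q (c - 1))" using IH by (intro poly_mono_nat) (simp add: c_def)
    finally have nb: "Suc n \<le> poly p (?Q (c - 1)) + 1" by simp
    have "?o (Suc n) \<le> size_fun \<phi> (Suc n)" using gt ans_bound[OF wf] by simp
    also have "\<dots> \<le> size_fun \<phi> (poly p (?Q (c - 1)) + 1)" by (rule size_fun_mono[OF nb])
    also have "\<dots> \<le> ?Q (Suc (c - 1))" by simp
    finally show ?thesis using cS c1 by simp
  qed
qed

theorem mainTheorem10:
  fixes F :: "orcl \<Rightarrow> orcl"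
  assumes "strongly_poly_time_computable F"
  shows "poly_time_computable F"
proof -
  obtain M p where wf: "wf_otm M" and comp: "otm_computes M F"
    and flr: "finite_length_revision M" and sc: "step_count M (poly p)"
    using assms unfolding strongly_poly_time_computable_def by blast
  obtain N where N: "\<And>\<phi> a. finite (range (length_rev M \<phi> a)) \<and> card (range (length_rev M \<phi> a)) \<le> N"
    using flr unfolding finite_length_revision_def by blast
  define P where "P = (\<lambda>l n. poly p (Qf p l n N))"
  have "sopoly P" unfolding P_def by (intro sopoly_comp sopoly_Qf)
  moreover have "otm_time M \<phi> a \<le> enat (P (size_fun \<phi>) (length a))" for \<phi> a
  proof -
    obtain m where m: "otm_time M \<phi> a = enat m"
      using comp unfolding otm_computes_def by (metis not_infinity_eq)
    let ?o = "length_rev M \<phi> a"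
    let ?Q = "Qf p (size_fun \<phi>) (length a)"
    have "m \<le> poly p (?o m)" using sc m by (simp add: step_count_def)
    also have "\<dots> \<le> poly p (?Q (card (?o ` {..m}) - 1))"
      using claim[OF wf sc, of m \<phi> a] m by (intro poly_mono_nat) simp
    also have "\<dots> \<le> poly p (?Q N)"
    proof (intro poly_mono_nat Qf_mono)
      have "card (?o ` {..m}) \<le> card (range ?o)"
        using N[of \<phi> a] by (intro card_mono) auto
      then show "card (?o ` {..m}) - 1 \<le> N" using N[of \<phi> a] by linarith
    qed
    finally show ?thesis using m by (simp add: P_def)
  qed
  ultimately show ?thesis unfolding poly_time_computable_def using wf comp by blast
qed

end
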